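(* Let $S$ be a group and $G,H$ subgroups of $S$ such that the cyclic $S$-acts $\overline{G}=S/G$ and $\overline{H}=S/H$ are geometrically equivalent. Then there exist $\alpha,\beta\in S$ such that $\alpha^{-1}G\alpha\subseteq H$ and $\beta^{-1}H\beta\subseteq G$.
   Context: A left $S$-act is a nonempty set with an action $S\times A\to A$ satisfying $1a=a$, $(st)a=s(ta)$; homomorphisms preserve the action. For a nonempty finite set $X$, $F_X=\coprod_{x\in X}S_x$ is the free $S$-act on $X$. For an $S$-act $G'$ and a relation $T\subseteq F_X\times F_X$, $T'_{G'}=\{\mu:F_X\to G' \text{ homomorphism}: T\subseteq\ker\mu\}$ and $T''_{G'}=\bigcap_{\mu\in T'_{G'}}\ker\mu$ (empty intersection $=F_X\times F_X$). $S$-acts $G_1,G_2$ are geometrically equivalent iff $T''_{G_1}=T''_{G_2}$ for all nonempty finite $X$ and all $T\subseteq F_X\times F_X$. For a subgroup $K$ of $S$, $\overline{K}=S/K$ is the $S$-act of left cosets with $s\cdot tK=stK$. *)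

theory Defs
  imports "HOL-Algebra.Coset"
begin

definition is_act :: "('g, 'b) monoid_scheme \<Rightarrow> 'a set \<Rightarrow> ('g \<Rightarrow> 'a \<Rightarrow> 'a) \<Rightarrow> bool" where
  "is_act S A act \<longleftrightarrow> A \<noteq> {}
     \<and> (\<forall>s\<in>carrier S. \<forall>a\<in>A. act s a \<in> A)
     \<and> (\<forall>a\<in>A. act \<one>\<^bsub>S\<^esub> a = a)
     \<and> (\<forall>s\<in>carrier S. \<forall>t\<in>carrier S. \<forall>a\<in>A. act (s \<otimes>\<^bsub>S\<^esub> t) a = act s (act t a))"

definition act_hom :: "('g, 'b) monoid_scheme \<Rightarrow> 'a set \<Rightarrow> ('g \<Rightarrow> 'a \<Rightarrow> 'a)
    \<Rightarrow> 'c set \<Rightarrow> ('g \<Rightarrow> 'c \<Rightarrow> 'c) \<Rightarrow> ('a \<Rightarrow> 'c) \<Rightarrow> bool" where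
  "act_hom S A f B g \<mu> \<longleftrightarrow> (\<forall>a\<in>A. \<mu> a \<in> B) \<and> (\<forall>s\<in>carrier S. \<forall>a\<in>A. \<mu> (f s a) = g s (\<mu> a))"

text \<open>Free S-act on X: the disjoint union of copies S_x; element (x,s) stands for s in S_x.\<close>
definition free_act :: "('g, 'b) monoid_scheme \<Rightarrow> 'x set \<Rightarrow> ('x \<times> 'g) set" where
  "free_act S X = X \<times> carrier S"

definition free_action :: "('g, 'b) monoid_scheme \<Rightarrow> 'g \<Rightarrow> ('x \<times> 'g) \<Rightarrow> ('x \<times> 'g)" where
  "free_action S s p = (fst p, s \<otimes>\<^bsub>S\<^esub> snd p)"

definition act_ker :: "'a set \<Rightarrow> ('a \<Rightarrow> 'c) \<Rightarrow> ('a \<times> 'a) set" where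
  "act_ker A \<mu> = {(p, q). p \<in> A \<and> q \<in> A \<and> \<mu> p = \<mu> q}"

text \<open>T'' with respect to the act (B, g): intersection of kernels of all homomorphisms
  F_X \<rightarrow> B whose kernel contains T (empty intersection = F_X \<times> F_X).\<close>
definition rel_closure :: "('g, 'b) monoid_scheme \<Rightarrow> 'c set \<Rightarrow> ('g \<Rightarrow> 'c \<Rightarrow> 'c)
    \<Rightarrow> 'x set \<Rightarrow> (('x \<times> 'g) \<times> ('x \<times> 'g)) set \<Rightarrow> (('x \<times> 'g) \<times> ('x \<times> 'g)) set" where
  "rel_closure S B g X T =
     {(p, q). p \<in> free_act S X \<and> q \<in> free_act S X \<and>
        (\<forall>\<mu>. act_hom S (free_act S X) (free_action S) B g \<mu> \<and> T \<subseteq> act_ker (free_act S X) \<mu>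
              \<longrightarrow> \<mu> p = \<mu> q)}"

text \<open>Geometric equivalence; finite sets X are taken as finite sets of naturals
  (every finite set is in bijection with one).\<close>
definition geom_equiv :: "('g, 'b) monoid_scheme \<Rightarrow> 'a set \<Rightarrow> ('g \<Rightarrow> 'a \<Rightarrow> 'a)
    \<Rightarrow> 'c set \<Rightarrow> ('g \<Rightarrow> 'c \<Rightarrow> 'c) \<Rightarrow> bool" where
  "geom_equiv S A f B g \<longleftrightarrow>
     (\<forall>X :: nat set. finite X \<and> X \<noteq> {} \<longrightarrow>
        (\<forall>T. T \<subseteq> free_act S X \<times> free_act S X \<longrightarrow> rel_closure S A f X T = rel_closure S B g X T))"

definition coset_act :: "('g, 'b) monoid_scheme \<Rightarrow> 'g set \<Rightarrow> 'g set set" where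
  "coset_act S K = {x <#\<^bsub>S\<^esub> K | x. x \<in> carrier S}"

definition coset_action :: "('g, 'b) monoid_scheme \<Rightarrow> 'g \<Rightarrow> 'g set \<Rightarrow> 'g set" where
  "coset_action S s C = s <#\<^bsub>S\<^esub> C"

end

theory Submission
  imports Defs
begin

lemma lcos_eq_imp:
  assumes "group S" "subgroup K S" "x \<in> carrier S" "y \<in> carrier S"
    and "x <#\<^bsub>S\<^esub> K = y <#\<^bsub>S\<^esub> K"
  shows "inv\<^bsub>S\<^esub> x \<otimes>\<^bsub>S\<^esub> y \<in> K"
proof -
  interpret group S by fact
  have "y \<in> y <#\<^bsub>S\<^esub> K" unfolding l_coset_def
    using assms subgroup.one_closed[OF assms(2)] by force
  then have "y \<in> x <#\<^bsub>S\<^esub> K" using assms(5) by simp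
  then obtain h where h: "h \<in> K" "y = x \<otimes>\<^bsub>S\<^esub> h" unfolding l_coset_def by blast
  have "h \<in> carrier S" using h(1) subgroup.mem_carrier[OF assms(2)] by blast
  then have "inv\<^bsub>S\<^esub> x \<otimes>\<^bsub>S\<^esub> y = h" using h(2) assms(3)
    by (simp add: m_assoc[symmetric])
  then show ?thesis using h by simp
qed

lemma lcos_mem_eq:
  assumes "group S" "subgroup K S" "x \<in> K"
  shows "x <#\<^bsub>S\<^esub> K = K"
proof -
  interpret group S by fact
  interpret K: subgroup K S by fact
  have xc: "x \<in> carrier S" using assms(3) K.mem_carrier by blast
  show ?thesis
  proof
    show "x <#\<^bsub>S\<^esub> K \<subseteq> K" unfolding l_coset_def using assms(3) K.mem_carrier by blast
    show "K \<subseteq> x <#\<^bsub>S\<^esub> K"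
    proof
      fix k assume k: "k \<in> K"
      have kc: "k \<in> carrier S" using k K.mem_carrier by blast
      have "k = x \<otimes>\<^bsub>S\<^esub> (inv\<^bsub>S\<^esub> x \<otimes>\<^bsub>S\<^esub> k)" using xc kc by (simp add: m_assoc[symmetric])
      moreover have "inv\<^bsub>S\<^esub> x \<otimes>\<^bsub>S\<^esub> k \<in> K" using assms(3) k K.m_closed K.m_inv_closed by blast
      ultimately show "k \<in> x <#\<^bsub>S\<^esub> K" unfolding l_coset_def by blast
    qed
  qed
qed

lemma hom_mu:
  assumes "group S" "subgroup K S" "a \<in> carrier S"
  shows "act_hom S (free_act S X) (free_action S) (coset_act S K) (coset_action S)
           (\<lambda>p. (snd p \<otimes>\<^bsub>S\<^esub> a) <#\<^bsub>S\<^esub> K)"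
proof -
  interpret group S by fact
  have sub: "K \<subseteq> carrier S" using subgroup.subset[OF assms(2)] .
  show ?thesis
    unfolding act_hom_def free_act_def free_action_def coset_act_def coset_action_def
    using assms sub by (auto simp: lcos_m_assoc m_assoc)
qed

lemma one_side:
  assumes "group S" and "subgroup G S" and "subgroup H S"
    and ge: "geom_equiv S (coset_act S G) (coset_action S) (coset_act S H) (coset_action S)"
  shows "\<exists>\<alpha>\<in>carrier S. (\<lambda>g. inv\<^bsub>S\<^esub> \<alpha> \<otimes>\<^bsub>S\<^esub> g \<otimes>\<^bsub>S\<^esub> \<alpha>) ` G \<subseteq> H"
proof (rule ccontr)
  interpret group S by fact
  assume no: "\<not> ?thesis"
  have Gs: "G \<subseteq> carrier S" using subgroup.subset[OF assms(2)] .
  have Hs: "H \<subseteq> carrier S" using subgroup.subset[OF assms(3)] .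
  let ?X = "{0::nat}"
  let ?F = "free_act S ?X"
  define T where "T = {((0::nat, g), (0::nat, \<one>\<^bsub>S\<^esub>)) | g. g \<in> G}"
  have TF: "T \<subseteq> ?F \<times> ?F" unfolding T_def free_act_def using Gs by auto
  have eq: "rel_closure S (coset_act S G) (coset_action S) ?X T
          = rel_closure S (coset_act S H) (coset_action S) ?X T"
    using ge TF unfolding geom_equiv_def by auto
  have noH: False if hom: "act_hom S ?F (free_action S) (coset_act S H) (coset_action S) \<mu>"
      and Tk: "T \<subseteq> act_ker ?F \<mu>" for \<mu>
  proof -
    have "\<mu> (0, \<one>\<^bsub>S\<^esub>) \<in> coset_act S H" using hom unfolding act_hom_def free_act_def by auto
    then obtain a where a: "a \<in> carrier S" "\<mu> (0, \<one>\<^bsub>S\<^esub>) = a <#\<^bsub>S\<^esub> H"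
      unfolding coset_act_def by auto
    have mus: "\<mu> (0, s) = (s \<otimes>\<^bsub>S\<^esub> a) <#\<^bsub>S\<^esub> H" if "s \<in> carrier S" for s
    proof -
      have "\<mu> (free_action S s (0, \<one>\<^bsub>S\<^esub>)) = coset_action S s (\<mu> (0, \<one>\<^bsub>S\<^esub>))"
        using hom that unfolding act_hom_def free_act_def by auto
      then show ?thesis using that a Hs
        by (simp add: free_action_def coset_action_def lcos_m_assoc)
    qed
    have "(\<lambda>g. inv\<^bsub>S\<^esub> a \<otimes>\<^bsub>S\<^esub> g \<otimes>\<^bsub>S\<^esub> a) ` G \<subseteq> H"
    proof
      fix y assume "y \<in> (\<lambda>g. inv\<^bsub>S\<^esub> a \<otimes>\<^bsub>S\<^esub> g \<otimes>\<^bsub>S\<^esub> a) ` G"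
      then obtain g where g: "g \<in> G" "y = inv\<^bsub>S\<^esub> a \<otimes>\<^bsub>S\<^esub> g \<otimes>\<^bsub>S\<^esub> a" by blast
      have gc: "g \<in> carrier S" using g Gs by blast
      have "((0::nat, g), (0::nat, \<one>\<^bsub>S\<^esub>)) \<in> act_ker ?F \<mu>" using Tk g unfolding T_def by blast
      then have "\<mu> (0, g) = \<mu> (0, \<one>\<^bsub>S\<^esub>)" unfolding act_ker_def by simp
      then have "(g \<otimes>\<^bsub>S\<^esub> a) <#\<^bsub>S\<^esub> H = a <#\<^bsub>S\<^esub> H" using mus[OF gc] a by simp
      then have "inv\<^bsub>S\<^esub> a \<otimes>\<^bsub>S\<^esub> (g \<otimes>\<^bsub>S\<^esub> a) \<in> H"
        using lcos_eq_imp[OF assms(1,3), of a "g \<otimes>\<^bsub>S\<^esub> a"] a gc by simp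
      then show "y \<in> H" using g a gc by (simp add: m_assoc)
    qed
    then show False using no a by blast
  qed
  have allH: "rel_closure S (coset_act S H) (coset_action S) ?X T = ?F \<times> ?F"
    unfolding rel_closure_def using noH by auto
  have Gall: "s \<in> G" if s: "s \<in> carrier S" for s
  proof -
    have "((0::nat, s), (0::nat, \<one>\<^bsub>S\<^esub>)) \<in> rel_closure S (coset_act S G) (coset_action S) ?X T"
      using eq allH s unfolding free_act_def by auto
    moreover have "act_hom S ?F (free_action S) (coset_act S G) (coset_action S)
           (\<lambda>p. (snd p \<otimes>\<^bsub>S\<^esub> \<one>\<^bsub>S\<^esub>) <#\<^bsub>S\<^esub> G)" using hom_mu[OF assms(1,2) one_closed] .
    moreover have "T \<subseteq> act_ker ?F (\<lambda>p. (snd p \<otimes>\<^bsub>S\<^esub> \<one>\<^bsub>S\<^esub>) <#\<^bsub>S\<^esub> G)"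
    proof
      fix z assume "z \<in> T"
      then obtain g where g: "g \<in> G" "z = ((0::nat, g), (0::nat, \<one>\<^bsub>S\<^esub>))" unfolding T_def by blast
      have gc: "g \<in> carrier S" using g Gs by blast
      have "(g \<otimes>\<^bsub>S\<^esub> \<one>\<^bsub>S\<^esub>) <#\<^bsub>S\<^esub> G = (\<one>\<^bsub>S\<^esub> \<otimes>\<^bsub>S\<^esub> \<one>\<^bsub>S\<^esub>) <#\<^bsub>S\<^esub> G"
        using gc g lcos_mem_eq[OF assms(1,2)] lcos_mult_one[OF Gs] by simp
      then show "z \<in> act_ker ?F (\<lambda>p. (snd p \<otimes>\<^bsub>S\<^esub> \<one>\<^bsub>S\<^esub>) <#\<^bsub>S\<^esub> G)"
        unfolding act_ker_def free_act_def using g gc by auto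
    qed
    ultimately have "(s \<otimes>\<^bsub>S\<^esub> \<one>\<^bsub>S\<^esub>) <#\<^bsub>S\<^esub> G = (\<one>\<^bsub>S\<^esub> \<otimes>\<^bsub>S\<^esub> \<one>\<^bsub>S\<^esub>) <#\<^bsub>S\<^esub> G"
      unfolding rel_closure_def by auto
    then have "s <#\<^bsub>S\<^esub> G = \<one>\<^bsub>S\<^esub> <#\<^bsub>S\<^esub> G" using s by simp
    then have "inv\<^bsub>S\<^esub> \<one>\<^bsub>S\<^esub> \<otimes>\<^bsub>S\<^esub> s \<in> G"
      using lcos_eq_imp[OF assms(1,2) one_closed s] by simp
    then show ?thesis using s by simp
  qed
  have GC: "G = carrier S" using Gall Gs by blast
  have eq2: "rel_closure S (coset_act S G) (coset_action S) ?X {}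
          = rel_closure S (coset_act S H) (coset_action S) ?X {}"
    using ge unfolding geom_equiv_def by auto
  have onept: "coset_act S G = {carrier S}"
  proof -
    have "x <#\<^bsub>S\<^esub> G = carrier S" if "x \<in> carrier S" for x
      using lcos_mem_eq[OF assms(1,2)] that GC by simp
    then show ?thesis unfolding coset_act_def by auto
  qed
  have allG: "rel_closure S (coset_act S G) (coset_action S) ?X {} = ?F \<times> ?F"
    unfolding rel_closure_def act_hom_def using onept by (auto simp: free_act_def)
  have Hall: "s \<in> H" if s: "s \<in> carrier S" for s
  proof -
    have "((0::nat, s), (0::nat, \<one>\<^bsub>S\<^esub>)) \<in> rel_closure S (coset_act S H) (coset_action S) ?X {}"
      using eq2 allG s unfolding free_act_def by auto
    moreover have "act_hom S ?F (free_action S) (coset_act S H) (coset_action S)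
           (\<lambda>p. (snd p \<otimes>\<^bsub>S\<^esub> \<one>\<^bsub>S\<^esub>) <#\<^bsub>S\<^esub> H)" using hom_mu[OF assms(1,3) one_closed] .
    ultimately have "(s \<otimes>\<^bsub>S\<^esub> \<one>\<^bsub>S\<^esub>) <#\<^bsub>S\<^esub> H = (\<one>\<^bsub>S\<^esub> \<otimes>\<^bsub>S\<^esub> \<one>\<^bsub>S\<^esub>) <#\<^bsub>S\<^esub> H"
      unfolding rel_closure_def by auto
    then have "s <#\<^bsub>S\<^esub> H = \<one>\<^bsub>S\<^esub> <#\<^bsub>S\<^esub> H" using s by simp
    then have "inv\<^bsub>S\<^esub> \<one>\<^bsub>S\<^esub> \<otimes>\<^bsub>S\<^esub> s \<in> H"
      using lcos_eq_imp[OF assms(1,3) one_closed s] by simp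
    then show ?thesis using s by simp
  qed
  have "(\<lambda>g. inv\<^bsub>S\<^esub> \<one>\<^bsub>S\<^esub> \<otimes>\<^bsub>S\<^esub> g \<otimes>\<^bsub>S\<^esub> \<one>\<^bsub>S\<^esub>) ` G \<subseteq> H"
    using Hall Gs by auto
  then show False using no by blast
qed

theorem proposition3p9:
  fixes S :: "('g, 'b) monoid_scheme" and G H :: "'g set"
  assumes "group S" and "subgroup G S" and "subgroup H S"
    and "geom_equiv S (coset_act S G) (coset_action S) (coset_act S H) (coset_action S)"
  shows "\<exists>\<alpha>\<in>carrier S. \<exists>\<beta>\<in>carrier S.
           (\<lambda>g. inv\<^bsub>S\<^esub> \<alpha> \<otimes>\<^bsub>S\<^esub> g \<otimes>\<^bsub>S\<^esub> \<alpha>) ` G \<subseteq> H \<and>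
           (\<lambda>h. inv\<^bsub>S\<^esub> \<beta> \<otimes>\<^bsub>S\<^esub> h \<otimes>\<^bsub>S\<^esub> \<beta>) ` H \<subseteq> G"
proof -
  have sym: "geom_equiv S (coset_act S H) (coset_action S) (coset_act S G) (coset_action S)"
    using assms(4) unfolding geom_equiv_def by metis
  show ?thesis using one_side[OF assms] one_side[OF assms(1,3,2) sym] by blast
qed

end
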